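(* Fix integers $n,N,k\geq1$, let $V=\mathbb{C}[z_0,\ldots,z_n]_k^{\oplus(N+1)}$, and let $V^{(1)}\subset V$ be the set of tuples $\psi=(\psi_0,\ldots,\psi_N)$ whose components do not simultaneously vanish on any codimension-one subvariety of $\mathbb{P}^n$, each defining a rational map $\psi:\mathbb{P}^n\dashrightarrow\mathbb{P}^N$. Let $V^{(2)}\subset V^{(1)}$ be the subset of $\psi$ such that $\psi$ is an immersion at a generic point of $\mathbb{P}^n$. Then $V^{(2)}$ is Zariski open in $V^{(1)}$. *)

theory Defs
  imports Complex_Main "HOL-Library.Poly_Mapping"
begin

text \<open>Multivariate polynomials over the complex numbers with variables of type 'v,
  represented as finitely supported maps from monomials (exponent vectors) to coefficients.\<close>
type_synonym 'v cpoly = "('v \<Rightarrow>\<^sub>0 nat) \<Rightarrow>\<^sub>0 complex"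

definition cpoly_eval :: "'v cpoly \<Rightarrow> ('v \<Rightarrow> complex) \<Rightarrow> complex" where
  "cpoly_eval P x = (\<Sum>m\<in>Poly_Mapping.keys P. Poly_Mapping.lookup P m * (\<Prod>v\<in>Poly_Mapping.keys m. (x v) ^ (Poly_Mapping.lookup m v)))"

text \<open>Homogeneous polynomial of degree d in the variables z_0..z_n (the zero polynomial
  counts as homogeneous of every degree).\<close>
definition hom_poly :: "nat \<Rightarrow> nat \<Rightarrow> nat cpoly \<Rightarrow> bool" where
  "hom_poly n d P \<longleftrightarrow> (\<forall>\<alpha>\<in>Poly_Mapping.keys P. Poly_Mapping.keys \<alpha> \<subseteq> {0..n} \<and> (\<Sum>j\<in>Poly_Mapping.keys \<alpha>. Poly_Mapping.lookup \<alpha> j) = d)"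

text \<open>Points of C^(n+1), as functions vanishing beyond index n.\<close>
definition cpt :: "nat \<Rightarrow> (nat \<Rightarrow> complex) \<Rightarrow> bool" where
  "cpt n p \<longleftrightarrow> (\<forall>j>n. p j = 0)"

text \<open>The space V = C[z_0..z_n]_k^(N+1): tuples psi_0..psi_N (psi i = 0 for i > N).\<close>
definition Vsp :: "nat \<Rightarrow> nat \<Rightarrow> nat \<Rightarrow> (nat \<Rightarrow> nat cpoly) set" where
  "Vsp n N k = {\<psi>. (\<forall>i\<le>N. hom_poly n k (\<psi> i)) \<and> (\<forall>i>N. \<psi> i = 0)}"

text \<open>Linear coordinates on V: the coefficients.\<close>
definition Vcoords :: "(nat \<Rightarrow> nat cpoly) \<Rightarrow> (nat \<times> (nat \<Rightarrow>\<^sub>0 nat)) \<Rightarrow> complex" where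
  "Vcoords \<psi> = (\<lambda>(i, \<alpha>). Poly_Mapping.lookup (\<psi> i) \<alpha>)"

text \<open>V^(1): the components do not simultaneously vanish on any hypersurface of P^n,
  i.e. on the zero locus of a nonzero homogeneous polynomial of positive degree.\<close>
definition V1 :: "nat \<Rightarrow> nat \<Rightarrow> nat \<Rightarrow> (nat \<Rightarrow> nat cpoly) set" where
  "V1 n N k = {\<psi>\<in>Vsp n N k. \<not> (\<exists>d f. d \<ge> 1 \<and> hom_poly n d f \<and> f \<noteq> 0 \<and>
       (\<forall>p. cpt n p \<and> p \<noteq> (\<lambda>_. 0) \<and> cpoly_eval f p = 0 \<longrightarrow> (\<forall>i\<le>N. cpoly_eval (\<psi> i) p = 0)))}"

text \<open>Differential of the affine lift psi-hat at p in direction v (i-th component).\<close>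
definition dpsi :: "(nat \<Rightarrow> nat cpoly) \<Rightarrow> (nat \<Rightarrow> complex) \<Rightarrow> (nat \<Rightarrow> complex) \<Rightarrow> nat \<Rightarrow> complex" where
  "dpsi \<psi> p v i = (THE D. ((\<lambda>t. cpoly_eval (\<psi> i) (\<lambda>j. p j + t * v j)) has_field_derivative D) (at 0))"

text \<open>psi is an immersion at the point [p] of P^n: psi is defined at [p] and its differential
  T_[p] P^n = C^(n+1)/C p \<rightarrow> T_[psi(p)] P^N = C^(N+1)/C psi(p) is injective.\<close>
definition immersion_at :: "nat \<Rightarrow> nat \<Rightarrow> (nat \<Rightarrow> nat cpoly) \<Rightarrow> (nat \<Rightarrow> complex) \<Rightarrow> bool" where
  "immersion_at n N \<psi> p \<longleftrightarrow> cpt n p \<and> p \<noteq> (\<lambda>_. 0) \<and> (\<exists>i\<le>N. cpoly_eval (\<psi> i) p \<noteq> 0) \<and>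
     (\<forall>v. cpt n v \<longrightarrow> (\<exists>c. \<forall>i\<le>N. dpsi \<psi> p v i = c * cpoly_eval (\<psi> i) p)
          \<longrightarrow> (\<exists>d. v = (\<lambda>j. d * p j)))"

text \<open>Immersion at a generic point: on a nonempty (basic) Zariski open subset D_+(g) of P^n.\<close>
definition generic_immersion :: "nat \<Rightarrow> nat \<Rightarrow> (nat \<Rightarrow> nat cpoly) \<Rightarrow> bool" where
  "generic_immersion n N \<psi> \<longleftrightarrow> (\<exists>d g. hom_poly n d g \<and>
      (\<exists>p. cpt n p \<and> p \<noteq> (\<lambda>_. 0) \<and> cpoly_eval g p \<noteq> 0) \<and>
      (\<forall>p. cpt n p \<and> p \<noteq> (\<lambda>_. 0) \<and> cpoly_eval g p \<noteq> 0 \<longrightarrow> immersion_at n N \<psi> p))"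

definition V2 :: "nat \<Rightarrow> nat \<Rightarrow> nat \<Rightarrow> (nat \<Rightarrow> nat cpoly) set" where
  "V2 n N k = {\<psi>\<in>V1 n N k. generic_immersion n N \<psi>}"

text \<open>A subset B of A \<subseteq> V is Zariski open in A: B = A minus a Zariski closed subset of V
  (common zero locus of a set S of polynomial functions in the coefficients).\<close>
definition zariski_open_in_V :: "(nat \<Rightarrow> nat cpoly) set \<Rightarrow> (nat \<Rightarrow> nat cpoly) set \<Rightarrow> bool" where
  "zariski_open_in_V A B \<longleftrightarrow> B \<subseteq> A \<and> (\<exists>S :: (nat \<times> (nat \<Rightarrow>\<^sub>0 nat)) cpoly set.
      B = {\<psi>\<in>A. \<exists>G\<in>S. cpoly_eval G (Vcoords \<psi>) \<noteq> 0})"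

end

theory Submission
  imports Defs "Jordan_Normal_Form.Determinant"
begin

definition mon :: "('v \<Rightarrow>\<^sub>0 nat) \<Rightarrow> ('v \<Rightarrow> complex) \<Rightarrow> complex" where
  "mon m x = (\<Prod>v\<in>Poly_Mapping.keys m. x v ^ Poly_Mapping.lookup m v)"

lemma eval_mon: "cpoly_eval P x = (\<Sum>m\<in>Poly_Mapping.keys P. Poly_Mapping.lookup P m * mon m x)"
  by (simp add: cpoly_eval_def mon_def)

lemma eval_superset:
  assumes "finite K" "Poly_Mapping.keys P \<subseteq> K"
  shows "cpoly_eval P x = (\<Sum>m\<in>K. Poly_Mapping.lookup P m * mon m x)"
  unfolding eval_mon
  by (rule sum.mono_neutral_left) (use assms in \<open>auto simp: in_keys_iff\<close>)

lemma mon_superset: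
  assumes "finite K" "Poly_Mapping.keys m \<subseteq> K"
  shows "mon m x = (\<Prod>v\<in>K. x v ^ Poly_Mapping.lookup m v)"
  unfolding mon_def
  by (rule prod.mono_neutral_left) (use assms in \<open>auto simp: in_keys_iff\<close>)

lemma mon_add: "mon (m + m') x = mon m x * mon m' x"
proof -
  let ?K = "Poly_Mapping.keys m \<union> Poly_Mapping.keys m'"
  have "mon (m + m') x = (\<Prod>v\<in>?K. x v ^ Poly_Mapping.lookup (m + m') v)"
    by (rule mon_superset) (auto simp: keys_add)
  also have "\<dots> = (\<Prod>v\<in>?K. x v ^ Poly_Mapping.lookup m v * x v ^ Poly_Mapping.lookup m' v)"
    by (simp add: lookup_add power_add)
  also have "\<dots> = mon m x * mon m' x"
    by (simp add: prod.distrib mon_superset[of ?K])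
  finally show ?thesis .
qed

lemma mon_zero[simp]: "mon 0 x = 1" by (simp add: mon_def)
lemma mon_var: "mon (Poly_Mapping.single v 1) x = x v" by (simp add: mon_def)
lemma mon_var': "mon (Poly_Mapping.single v (Suc 0)) x = x v" by (simp add: mon_def)

lemma eval_add: "cpoly_eval (P + Q) x = cpoly_eval P x + cpoly_eval Q x"
proof -
  let ?K = "Poly_Mapping.keys P \<union> Poly_Mapping.keys Q"
  show ?thesis
    using eval_superset[of ?K "P+Q" x] eval_superset[of ?K P x] eval_superset[of ?K Q x]
    by (auto simp: keys_add lookup_add distrib_right sum.distrib)
qed

lemma eval_zero[simp]: "cpoly_eval 0 x = 0" by (simp add: cpoly_eval_def)

lemma eval_sum: "cpoly_eval (\<Sum>i\<in>I. P i) x = (\<Sum>i\<in>I. cpoly_eval (P i) x)"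
  by (induction I rule: infinite_finite_induct) (auto simp: eval_add)

lemma eval_single: "cpoly_eval (Poly_Mapping.single m a) x = a * mon m x"
  by (simp add: eval_mon)

definition pmul :: "'v cpoly \<Rightarrow> 'v cpoly \<Rightarrow> 'v cpoly" where
  "pmul P Q = (\<Sum>m\<in>Poly_Mapping.keys P. \<Sum>m'\<in>Poly_Mapping.keys Q.
      Poly_Mapping.single (m + m') (Poly_Mapping.lookup P m * Poly_Mapping.lookup Q m'))"

lemma eval_pmul: "cpoly_eval (pmul P Q) x = cpoly_eval P x * cpoly_eval Q x"
proof -
  have "cpoly_eval (pmul P Q) x = (\<Sum>m\<in>Poly_Mapping.keys P. \<Sum>m'\<in>Poly_Mapping.keys Q.
      (Poly_Mapping.lookup P m * mon m x) * (Poly_Mapping.lookup Q m' * mon m' x))"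
    unfolding pmul_def eval_sum eval_single mon_add by (simp add: mult_ac)
  also have "\<dots> = cpoly_eval P x * cpoly_eval Q x"
    unfolding eval_mon sum_product ..
  finally show ?thesis .
qed

definition mdeg :: "(nat \<Rightarrow>\<^sub>0 nat) \<Rightarrow> nat" where
  "mdeg a = (\<Sum>j\<in>Poly_Mapping.keys a. Poly_Mapping.lookup a j)"

lemma mdeg_superset:
  assumes "finite K" "Poly_Mapping.keys a \<subseteq> K"
  shows "mdeg a = (\<Sum>j\<in>K. Poly_Mapping.lookup a j)"
  unfolding mdeg_def
  by (rule sum.mono_neutral_left) (use assms in \<open>auto simp: in_keys_iff\<close>)

lemma mdeg_add: "mdeg (a + b) = mdeg a + mdeg b"
proof -
  let ?K = "Poly_Mapping.keys a \<union> Poly_Mapping.keys b"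
  show ?thesis
    using mdeg_superset[of ?K "a+b"] mdeg_superset[of ?K a] mdeg_superset[of ?K b]
    by (auto simp: keys_add lookup_add sum.distrib)
qed

lemma hom_poly_alt: "hom_poly n d P \<longleftrightarrow> (\<forall>a\<in>Poly_Mapping.keys P. Poly_Mapping.keys a \<subseteq> {0..n} \<and> mdeg a = d)"
  by (simp add: hom_poly_def mdeg_def)

lemma hom_poly_zero: "hom_poly n d 0"
  by (simp add: hom_poly_def)

lemma hom_poly_const: "hom_poly n 0 (Poly_Mapping.single 0 c)"
  by (simp add: hom_poly_def)

lemma hom_poly_var: "j \<le> n \<Longrightarrow> hom_poly n 1 (Poly_Mapping.single (Poly_Mapping.single j 1) 1)"
  by (simp add: hom_poly_def)

lemma hom_poly_add: assumes "hom_poly n d P" "hom_poly n d Q" shows "hom_poly n d (P + Q)"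
  unfolding hom_poly_alt
proof
  fix a assume "a \<in> Poly_Mapping.keys (P + Q)"
  then have "a \<in> Poly_Mapping.keys P \<or> a \<in> Poly_Mapping.keys Q" using keys_add[of P Q] by blast
  then show "Poly_Mapping.keys a \<subseteq> {0..n} \<and> mdeg a = d" using assms unfolding hom_poly_alt by blast
qed

lemma hom_poly_sum: "(\<And>i. i \<in> I \<Longrightarrow> hom_poly n d (P i)) \<Longrightarrow> hom_poly n d (\<Sum>i\<in>I. P i)"
  by (induction I rule: infinite_finite_induct) (auto intro: hom_poly_add hom_poly_zero)

lemma hom_poly_single: "Poly_Mapping.keys a \<subseteq> {0..n} \<Longrightarrow> mdeg a = d \<Longrightarrow> hom_poly n d (Poly_Mapping.single a c)"
  by (simp add: hom_poly_alt)

lemma hom_poly_pmul: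
  assumes "hom_poly n d1 P" "hom_poly n d2 Q"
  shows "hom_poly n (d1 + d2) (pmul P Q)"
  unfolding pmul_def
proof (intro hom_poly_sum hom_poly_single)
  fix m m' assume "m \<in> Poly_Mapping.keys P" "m' \<in> Poly_Mapping.keys Q"
  then have a: "Poly_Mapping.keys m \<subseteq> {0..n} \<and> mdeg m = d1" and b: "Poly_Mapping.keys m' \<subseteq> {0..n} \<and> mdeg m' = d2"
    using assms unfolding hom_poly_alt by blast+
  have "Poly_Mapping.keys (m + m') \<subseteq> Poly_Mapping.keys m \<union> Poly_Mapping.keys m'" by (rule keys_add)
  then show "Poly_Mapping.keys (m + m') \<subseteq> {0..n}" using a b by blast
  show "mdeg (m + m') = d1 + d2" using a b by (simp add: mdeg_add)
qed

definition pf :: "(('v \<Rightarrow> complex) \<Rightarrow> complex) \<Rightarrow> bool" where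
  "pf f \<longleftrightarrow> (\<exists>P. \<forall>x. f x = cpoly_eval P x)"

definition hpf :: "nat \<Rightarrow> nat \<Rightarrow> ((nat \<Rightarrow> complex) \<Rightarrow> complex) \<Rightarrow> bool" where
  "hpf n d f \<longleftrightarrow> (\<exists>P. hom_poly n d P \<and> (\<forall>x. f x = cpoly_eval P x))"

lemma pf_const: "pf (\<lambda>x. c)"
  unfolding pf_def by (rule exI[of _ "Poly_Mapping.single 0 c"]) (simp add: eval_single)

lemma pf_var: "pf (\<lambda>x. x v)"
  unfolding pf_def by (rule exI[of _ "Poly_Mapping.single (Poly_Mapping.single v 1) 1"]) (simp add: eval_single mon_var')

lemma pf_add: "pf f \<Longrightarrow> pf g \<Longrightarrow> pf (\<lambda>x. f x + g x)"
  unfolding pf_def proof (elim exE)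
  fix P Q assume "\<forall>x. f x = cpoly_eval P x" "\<forall>x. g x = cpoly_eval Q x"
  then show "\<exists>R. \<forall>x. f x + g x = cpoly_eval R x" by (intro exI[of _ "P + Q"]) (simp add: eval_add)
qed

lemma pf_mult: "pf f \<Longrightarrow> pf g \<Longrightarrow> pf (\<lambda>x. f x * g x)"
  unfolding pf_def proof (elim exE)
  fix P Q assume "\<forall>x. f x = cpoly_eval P x" "\<forall>x. g x = cpoly_eval Q x"
  then show "\<exists>R. \<forall>x. f x * g x = cpoly_eval R x" by (intro exI[of _ "pmul P Q"]) (simp add: eval_pmul)
qed

lemma pf_sum: "(\<And>i. i \<in> I \<Longrightarrow> pf (f i)) \<Longrightarrow> pf (\<lambda>x. \<Sum>i\<in>I. f i x)"
  by (induction I rule: infinite_finite_induct) (auto intro: pf_add pf_const)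

lemma pf_prod: "(\<And>i. i \<in> I \<Longrightarrow> pf (f i)) \<Longrightarrow> pf (\<lambda>x. \<Prod>i\<in>I. f i x)"
  by (induction I rule: infinite_finite_induct) (auto intro: pf_mult pf_const)

lemma hpf_const: "hpf n 0 (\<lambda>x. c)"
  unfolding hpf_def by (rule exI[of _ "Poly_Mapping.single 0 c"]) (simp add: eval_single hom_poly_const)

lemma hpf_zero: "hpf n d (\<lambda>x. 0)"
  unfolding hpf_def by (rule exI[of _ 0]) (simp add: hom_poly_zero)

lemma hpf_var: "j \<le> n \<Longrightarrow> hpf n 1 (\<lambda>x. x j)"
  unfolding hpf_def by (rule exI[of _ "Poly_Mapping.single (Poly_Mapping.single j 1) 1"]) (use hom_poly_var[of j n] in \<open>simp add: eval_single mon_var'\<close>)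

lemma hpf_add: "hpf n d f \<Longrightarrow> hpf n d g \<Longrightarrow> hpf n d (\<lambda>x. f x + g x)"
  unfolding hpf_def proof (elim exE conjE)
  fix P Q assume "\<forall>x. f x = cpoly_eval P x" "\<forall>x. g x = cpoly_eval Q x" "hom_poly n d P" "hom_poly n d Q"
  then show "\<exists>R. hom_poly n d R \<and> (\<forall>x. f x + g x = cpoly_eval R x)"
    by (intro exI[of _ "P + Q"]) (simp add: eval_add hom_poly_add)
qed

lemma hpf_mult: "hpf n d1 f \<Longrightarrow> hpf n d2 g \<Longrightarrow> hpf n (d1 + d2) (\<lambda>x. f x * g x)"
  unfolding hpf_def proof (elim exE conjE)
  fix P Q assume "\<forall>x. f x = cpoly_eval P x" "\<forall>x. g x = cpoly_eval Q x" "hom_poly n d1 P" "hom_poly n d2 Q"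
  then show "\<exists>R. hom_poly n (d1 + d2) R \<and> (\<forall>x. f x * g x = cpoly_eval R x)"
    by (intro exI[of _ "pmul P Q"]) (simp add: eval_pmul hom_poly_pmul)
qed

lemma hpf_scale: "hpf n d f \<Longrightarrow> hpf n d (\<lambda>x. c * f x)"
  using hpf_mult[OF hpf_const, of n d f c] by simp

lemma hpf_sum: "(\<And>i. i \<in> I \<Longrightarrow> hpf n d (f i)) \<Longrightarrow> hpf n d (\<lambda>x. \<Sum>i\<in>I. f i x)"
  by (induction I rule: infinite_finite_induct) (auto intro: hpf_add hpf_zero)

lemma hpf_prod: "(\<And>i. i \<in> I \<Longrightarrow> hpf n (d i) (f i)) \<Longrightarrow> hpf n (\<Sum>i\<in>I. d i) (\<lambda>x. \<Prod>i\<in>I. f i x)"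
proof (induction I rule: infinite_finite_induct)
  case (infinite A) then show ?case by (simp add: hpf_const)
next
  case empty then show ?case by (simp add: hpf_const)
next
  case (insert a A)
  have h1: "hpf n (sum d A) (\<lambda>x. \<Prod>i\<in>A. f i x)"
    by (rule insert.IH) (rule insert.prems, simp)
  have h2: "hpf n (d a) (f a)" by (rule insert.prems) simp
  have "hpf n (d a + (\<Sum>i\<in>A. d i)) (\<lambda>x. f a x * (\<Prod>i\<in>A. f i x))"
    by (rule hpf_mult[OF h2 h1])
  moreover have "(\<Sum>i\<in>insert a A. d i) = d a + (\<Sum>i\<in>A. d i)" using insert(1,2) by simp
  moreover have "(\<lambda>x. \<Prod>i\<in>insert a A. f i x) = (\<lambda>x. f a x * (\<Prod>i\<in>A. f i x))" using insert(1,2) by simp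
  ultimately show ?case by simp
qed

lemma hpf_power: "hpf n d f \<Longrightarrow> hpf n (e * d) (\<lambda>x. f x ^ e)"
  using hpf_prod[of "{..<e}" n "\<lambda>_. d" "\<lambda>_. f"] by simp

definition Pd :: "nat \<Rightarrow> (nat \<Rightarrow>\<^sub>0 nat) \<Rightarrow> (nat \<Rightarrow> complex) \<Rightarrow> complex" where
  "Pd u a z = of_nat (Poly_Mapping.lookup a u) * z u ^ (Poly_Mapping.lookup a u - 1) *
      (\<Prod>w\<in>Poly_Mapping.keys a - {u}. z w ^ Poly_Mapping.lookup a w)"

lemma Pd_notin: "u \<notin> Poly_Mapping.keys a \<Longrightarrow> Pd u a z = 0"
  by (simp add: Pd_def in_keys_iff)

lemma deriv_mon:
  "((\<lambda>t. mon a (\<lambda>j. p j + t * v j)) has_field_derivative (\<Sum>u\<in>Poly_Mapping.keys a. v u * Pd u a p)) (at 0)"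
proof -
  have d: "((\<lambda>t. (p u + t * v u) ^ Poly_Mapping.lookup a u) has_field_derivative
      of_nat (Poly_Mapping.lookup a u) * (v u * (p u + 0 * v u) ^ (Poly_Mapping.lookup a u - Suc 0))) (at 0)" for u
    by (rule DERIV_power) (auto intro!: derivative_eq_intros)
  have "((\<lambda>t. \<Prod>u\<in>Poly_Mapping.keys a. (p u + t * v u) ^ Poly_Mapping.lookup a u) has_field_derivative
      (\<Sum>u\<in>Poly_Mapping.keys a. (of_nat (Poly_Mapping.lookup a u) * (v u * (p u + 0 * v u) ^ (Poly_Mapping.lookup a u - Suc 0)))
         * (\<Prod>y\<in>Poly_Mapping.keys a - {u}. (p y + 0 * v y) ^ Poly_Mapping.lookup a y))) (at 0)"
    by (rule has_field_derivative_prod) (rule d)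
  moreover have "(\<Sum>u\<in>Poly_Mapping.keys a. (of_nat (Poly_Mapping.lookup a u) * (v u * (p u + 0 * v u) ^ (Poly_Mapping.lookup a u - Suc 0)))
         * (\<Prod>y\<in>Poly_Mapping.keys a - {u}. (p y + 0 * v y) ^ Poly_Mapping.lookup a y))
      = (\<Sum>u\<in>Poly_Mapping.keys a. v u * Pd u a p)"
    by (simp add: Pd_def mult_ac)
  ultimately show ?thesis by (simp add: mon_def)
qed

definition Jent :: "nat cpoly \<Rightarrow> nat \<Rightarrow> (nat \<Rightarrow> complex) \<Rightarrow> complex" where
  "Jent P u z = (\<Sum>m\<in>Poly_Mapping.keys P. Poly_Mapping.lookup P m * Pd u m z)"

lemma deriv_eval:
  "((\<lambda>t. cpoly_eval P (\<lambda>j. p j + t * v j)) has_field_derivative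
     (\<Sum>m\<in>Poly_Mapping.keys P. Poly_Mapping.lookup P m * (\<Sum>u\<in>Poly_Mapping.keys m. v u * Pd u m p))) (at 0)"
  unfolding eval_mon
  by (intro DERIV_sum DERIV_cmult deriv_mon)

lemma Pd_sum_keys:
  assumes "Poly_Mapping.keys m \<subseteq> {0..n}"
  shows "(\<Sum>u\<in>Poly_Mapping.keys m. v u * Pd u m p) = (\<Sum>u\<in>{0..n}. v u * Pd u m p)"
  by (rule sum.mono_neutral_left) (use assms in \<open>auto simp: Pd_notin\<close>)

lemma dpsi_eq:
  assumes "hom_poly n k (\<psi> i)"
  shows "dpsi \<psi> p v i = (\<Sum>u\<in>{0..n}. v u * Jent (\<psi> i) u p)"
proof -
  let ?D = "\<Sum>m\<in>Poly_Mapping.keys (\<psi> i). Poly_Mapping.lookup (\<psi> i) m * (\<Sum>u\<in>Poly_Mapping.keys m. v u * Pd u m p)"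
  have dd: "((\<lambda>t. cpoly_eval (\<psi> i) (\<lambda>j. p j + t * v j)) has_field_derivative ?D) (at 0)"
    by (rule deriv_eval)
  have "dpsi \<psi> p v i = ?D"
    unfolding dpsi_def
    by (intro the_equality dd) (rule DERIV_unique[OF _ dd])
  also have "\<dots> = (\<Sum>m\<in>Poly_Mapping.keys (\<psi> i). Poly_Mapping.lookup (\<psi> i) m * (\<Sum>u\<in>{0..n}. v u * Pd u m p))"
    using assms by (intro sum.cong refl arg_cong2[where f="(*)"] Pd_sum_keys) (auto simp: hom_poly_def)
  also have "\<dots> = (\<Sum>u\<in>{0..n}. v u * Jent (\<psi> i) u p)"
    by (simp add: Jent_def sum_distrib_left sum_distrib_right mult_ac sum.swap[of _ "{0..n}"])
  finally show ?thesis .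
qed

lemma euler_mon:
  "(\<Sum>u\<in>Poly_Mapping.keys m. p u * Pd u m p) = of_nat (mdeg m) * mon m p"
proof -
  have "p u * Pd u m p = of_nat (Poly_Mapping.lookup m u) * mon m p" if "u \<in> Poly_Mapping.keys m" for u
  proof -
    from that have l: "Poly_Mapping.lookup m u \<ge> 1" by (simp add: in_keys_iff)
    have "mon m p = p u ^ Poly_Mapping.lookup m u * (\<Prod>w\<in>Poly_Mapping.keys m - {u}. p w ^ Poly_Mapping.lookup m w)"
      unfolding mon_def using that by (simp add: prod.remove)
    moreover have "p u * p u ^ (Poly_Mapping.lookup m u - 1) = p u ^ Poly_Mapping.lookup m u"
      using l by (simp add: power_eq_if[of _ "Poly_Mapping.lookup m u"])
    ultimately show ?thesis unfolding Pd_def by (metis (no_types, lifting) mult.assoc mult.left_commute)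
  qed
  then have "(\<Sum>u\<in>Poly_Mapping.keys m. p u * Pd u m p) = (\<Sum>u\<in>Poly_Mapping.keys m. of_nat (Poly_Mapping.lookup m u) * mon m p)"
    by (rule sum.cong[OF refl])
  also have "\<dots> = of_nat (mdeg m) * mon m p"
    by (simp add: mdeg_def sum_distrib_right)
  finally show ?thesis .
qed

lemma euler:
  assumes "hom_poly n k P"
  shows "(\<Sum>u\<in>{0..n}. p u * Jent P u p) = of_nat k * cpoly_eval P p"
proof -
  have "(\<Sum>u\<in>{0..n}. p u * Jent P u p) = (\<Sum>m\<in>Poly_Mapping.keys P. Poly_Mapping.lookup P m * (\<Sum>u\<in>{0..n}. p u * Pd u m p))"
    by (simp add: Jent_def sum_distrib_left sum_distrib_right mult_ac sum.swap[of _ "{0..n}"])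
  also have "\<dots> = (\<Sum>m\<in>Poly_Mapping.keys P. Poly_Mapping.lookup P m * (of_nat k * mon m p))"
  proof (rule sum.cong[OF refl])
    fix m assume "m \<in> Poly_Mapping.keys P"
    then have "Poly_Mapping.keys m \<subseteq> {0..n}" "mdeg m = k" using assms by (auto simp: hom_poly_alt)
    then show "Poly_Mapping.lookup P m * (\<Sum>u\<in>{0..n}. p u * Pd u m p) = Poly_Mapping.lookup P m * (of_nat k * mon m p)"
      using Pd_sum_keys[where m=m and n=n and v=p and p=p] euler_mon[where m=m and p=p] by simp
  qed
  also have "\<dots> = of_nat k * cpoly_eval P p"
    by (simp add: eval_mon sum_distrib_left mult_ac)
  finally show ?thesis .
qed

lemma hpf_deg_cong: "hpf n d f \<Longrightarrow> d = d' \<Longrightarrow> hpf n d' f" by simp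

lemma hpf_Pd:
  assumes "Poly_Mapping.keys m \<subseteq> {0..n}" "mdeg m = k"
  shows "hpf n (k - 1) (Pd u m)"
proof (cases "u \<in> Poly_Mapping.keys m")
  case False
  then have "Pd u m = (\<lambda>z. 0)" by (auto simp: Pd_notin)
  then show ?thesis by (simp add: hpf_zero)
next
  case True
  let ?l = "Poly_Mapping.lookup m u"
  have un: "u \<le> n" using True assms by auto
  have h1: "hpf n ((?l - 1) * 1) (\<lambda>z. z u ^ (?l - 1))"
    by (rule hpf_power[OF hpf_var[OF un]])
  have h2: "hpf n (\<Sum>w\<in>Poly_Mapping.keys m - {u}. Poly_Mapping.lookup m w * 1)
      (\<lambda>z. \<Prod>w\<in>Poly_Mapping.keys m - {u}. z w ^ Poly_Mapping.lookup m w)"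
    by (rule hpf_prod, rule hpf_power, rule hpf_var) (use assms in auto)
  have "hpf n ((?l - 1) * 1 + (\<Sum>w\<in>Poly_Mapping.keys m - {u}. Poly_Mapping.lookup m w * 1))
     (\<lambda>z. z u ^ (?l - 1) * (\<Prod>w\<in>Poly_Mapping.keys m - {u}. z w ^ Poly_Mapping.lookup m w))"
    by (rule hpf_mult[OF h1 h2])
  then have h3: "hpf n (k - 1) (\<lambda>z. z u ^ (?l - 1) * (\<Prod>w\<in>Poly_Mapping.keys m - {u}. z w ^ Poly_Mapping.lookup m w))"
  proof (rule hpf_deg_cong)
    have "mdeg m = ?l + (\<Sum>w\<in>Poly_Mapping.keys m - {u}. Poly_Mapping.lookup m w)"
      unfolding mdeg_def using True by (simp add: sum.remove)
    moreover have "?l \<ge> 1" using True by (simp add: in_keys_iff)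
    ultimately show "(?l - 1) * 1 + (\<Sum>w\<in>Poly_Mapping.keys m - {u}. Poly_Mapping.lookup m w * 1) = k - 1"
      using assms(2) by simp
  qed
  have "Pd u m = (\<lambda>z. of_nat ?l * (z u ^ (?l - 1) * (\<Prod>w\<in>Poly_Mapping.keys m - {u}. z w ^ Poly_Mapping.lookup m w)))"
    by (simp add: Pd_def fun_eq_iff mult_ac)
  then show ?thesis using hpf_scale[OF h3] by simp
qed

lemma hpf_Jent:
  assumes "hom_poly n k P"
  shows "hpf n (k - 1) (Jent P u)"
proof -
  have "hpf n (k - 1) (\<lambda>z. \<Sum>m\<in>Poly_Mapping.keys P. Poly_Mapping.lookup P m * Pd u m z)"
    by (rule hpf_sum, rule hpf_scale, rule hpf_Pd) (use assms in \<open>auto simp: hom_poly_alt\<close>)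
  then show ?thesis by (simp add: Jent_def[abs_def])
qed

lemma finite_Mk: "finite {a :: nat \<Rightarrow>\<^sub>0 nat. Poly_Mapping.keys a \<subseteq> {0..n} \<and> mdeg a = k}"
  (is "finite ?M")
proof -
  let ?F = "{f. \<forall>x. (x \<in> {0..n} \<longrightarrow> f x \<in> {0..k}) \<and> (x \<notin> {0..n} \<longrightarrow> f x = (0::nat))}"
  have fF: "finite ?F" by (rule finite_set_of_finite_funs) auto
  have inj: "inj_on Poly_Mapping.lookup ?M"
    by (rule inj_onI) (rule poly_mapping_eqI, simp)
  have sub: "Poly_Mapping.lookup ` ?M \<subseteq> ?F"
  proof
    fix f assume "f \<in> Poly_Mapping.lookup ` ?M"
    then obtain a where a: "a \<in> ?M" "f = Poly_Mapping.lookup a" by blast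
    have "Poly_Mapping.lookup a x \<le> k" for x
    proof (cases "x \<in> Poly_Mapping.keys a")
      case True
      then have "Poly_Mapping.lookup a x \<le> (\<Sum>j\<in>Poly_Mapping.keys a. Poly_Mapping.lookup a j)"
        by (intro member_le_sum) auto
      then show ?thesis using a by (simp add: mdeg_def)
    next
      case False then show ?thesis by (simp add: in_keys_iff)
    qed
    moreover have "x \<notin> {0..n} \<Longrightarrow> Poly_Mapping.lookup a x = 0" for x
      using a by (auto simp: in_keys_iff)
    ultimately show "f \<in> ?F" using a by auto
  qed
  show ?thesis
    using finite_imageD[OF finite_subset[OF sub fF] inj] .
qed

lemma det_mat_expand:
  "det (mat m m (\<lambda>(a,b). f a b)) = (\<Sum>\<sigma>\<in>{\<sigma>. \<sigma> permutes {0..<m}}. signof \<sigma> * (\<Prod>a\<in>{0..<m}. f a (\<sigma> a)))"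
  unfolding det_def
  by (auto intro!: sum.cong prod.cong arg_cong2[where f="(*)"] simp: permutes_in_image)

lemma pf_det:
  assumes "\<And>a b. pf (\<lambda>c. f c a b)"
  shows "pf (\<lambda>c. det (mat m m (\<lambda>(a,b). f c a b)))"
  unfolding det_mat_expand
  by (intro pf_sum pf_mult pf_const pf_prod assms)

lemma hpf_det:
  assumes "\<And>a b. hpf n d (\<lambda>z. f z a b)"
  shows "hpf n (m * d) (\<lambda>z. det (mat m m (\<lambda>(a,b). f z a b)))"
  unfolding det_mat_expand
proof (intro hpf_sum hpf_scale)
  fix \<sigma>
  have "hpf n (\<Sum>a\<in>{0..<m}. d) (\<lambda>z. \<Prod>a\<in>{0..<m}. f z a (\<sigma> a))"
    by (rule hpf_prod) (rule assms)
  then show "hpf n (m * d) (\<lambda>z. \<Prod>a\<in>{0..<m}. f z a (\<sigma> a))" by simp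
qed

definition MJ :: "nat \<Rightarrow> nat \<Rightarrow> (nat \<Rightarrow> nat \<Rightarrow> complex) \<Rightarrow> (nat \<Rightarrow> nat cpoly) \<Rightarrow> (nat \<Rightarrow> complex) \<Rightarrow> complex mat" where
  "MJ n N R \<psi> z = mat (Suc n) (Suc n) (\<lambda>(a,b). \<Sum>i\<in>{0..N}. R a i * Jent (\<psi> i) b z)"

definition Jv :: "(nat \<Rightarrow> nat cpoly) \<Rightarrow> (nat \<Rightarrow> complex) \<Rightarrow> nat \<Rightarrow> (nat \<Rightarrow> complex) \<Rightarrow> nat \<Rightarrow> complex" where
  "Jv \<psi> z n v i = (\<Sum>b\<in>{0..n}. v b * Jent (\<psi> i) b z)"

lemma MJ_carrier: "MJ n N R \<psi> z \<in> carrier_mat (Suc n) (Suc n)"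
  by (simp add: MJ_def)

lemma MJ_mult:
  assumes "w \<in> carrier_vec (Suc n)" "a < Suc n"
  shows "(MJ n N R \<psi> z *\<^sub>v w) $ a = (\<Sum>i\<in>{0..N}. R a i * Jv \<psi> z n (\<lambda>j. w $ j) i)"
proof -
  have "(MJ n N R \<psi> z *\<^sub>v w) $ a = (\<Sum>b\<in>{0..<Suc n}. (\<Sum>i\<in>{0..N}. R a i * Jent (\<psi> i) b z) * w $ b)"
    using assms by (simp add: MJ_def scalar_prod_def)
  also have "\<dots> = (\<Sum>i\<in>{0..N}. R a i * Jv \<psi> z n (\<lambda>j. w $ j) i)"
    unfolding Jv_def atLeastLessThanSuc_atLeastAtMost
    by (simp add: sum_distrib_left sum_distrib_right mult_ac sum.swap[of _ "{0..n}"])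
  finally show ?thesis .
qed

lemma Jv_cong: "(\<And>j. j \<le> n \<Longrightarrow> v j = v' j) \<Longrightarrow> Jv \<psi> z n v i = Jv \<psi> z n v' i"
  unfolding Jv_def by (intro sum.cong) auto

lemma det_ne0_inj:
  assumes "det (MJ n N R \<psi> z) \<noteq> 0"
    and "\<And>a. a \<le> n \<Longrightarrow> (\<Sum>i\<in>{0..N}. R a i * Jv \<psi> z n v i) = 0"
    and "cpt n v"
  shows "v = (\<lambda>_. 0)"
proof -
  let ?w = "vec (Suc n) v"
  have w: "?w \<in> carrier_vec (Suc n)" by simp
  have "MJ n N R \<psi> z *\<^sub>v ?w = 0\<^sub>v (Suc n)"
  proof (rule eq_vecI)
    fix a assume "a < dim_vec (0\<^sub>v (Suc n) :: complex vec)"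
    then have a: "a < Suc n" by simp
    have "Jv \<psi> z n (\<lambda>j. ?w $ j) i = Jv \<psi> z n v i" for i
      by (rule Jv_cong) simp
    then show "(MJ n N R \<psi> z *\<^sub>v ?w) $ a = 0\<^sub>v (Suc n) $ a"
      using MJ_mult[OF w a, of N R \<psi> z] assms(2)[of a] a by simp
  qed (simp add: MJ_def)
  then have "?w = 0\<^sub>v (Suc n)"
    using det_0_iff_vec_prod_zero_field[OF MJ_carrier, of n N R \<psi> z] assms(1) w by blast
  then have "v j = 0" if "j \<le> n" for j
    using that by (metis index_vec index_zero_vec(1) less_Suc_eq_le)
  then show ?thesis using assms(3) unfolding cpt_def fun_eq_iff by (metis not_le)
qed

lemma inj_det_ne0:
  assumes "\<And>v. cpt n v \<Longrightarrow> (\<forall>a\<le>n. (\<Sum>i\<in>{0..N}. R a i * Jv \<psi> z n v i) = 0) \<Longrightarrow> v = (\<lambda>_. 0)"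
  shows "det (MJ n N R \<psi> z) \<noteq> 0"
proof
  assume "det (MJ n N R \<psi> z) = 0"
  then obtain w where w: "w \<in> carrier_vec (Suc n)" "w \<noteq> 0\<^sub>v (Suc n)" "MJ n N R \<psi> z *\<^sub>v w = 0\<^sub>v (Suc n)"
    using det_0_iff_vec_prod_zero_field[OF MJ_carrier, of n N R \<psi> z] by blast
  define v where "v = (\<lambda>j. if j \<le> n then w $ j else 0)"
  have cv: "cpt n v" by (simp add: cpt_def v_def)
  have "\<forall>a\<le>n. (\<Sum>i\<in>{0..N}. R a i * Jv \<psi> z n v i) = 0"
  proof (intro allI impI)
    fix a assume a: "a \<le> n"
    have "Jv \<psi> z n v i = Jv \<psi> z n (\<lambda>j. w $ j) i" for i
      by (rule Jv_cong) (simp add: v_def)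
    then show "(\<Sum>i\<in>{0..N}. R a i * Jv \<psi> z n v i) = 0"
      using MJ_mult[OF w(1), of a N R \<psi> z] w(3) a by simp
  qed
  then have "v = (\<lambda>_. 0)" using assms cv by blast
  have "w = 0\<^sub>v (Suc n)"
  proof (rule eq_vecI)
    fix i assume i: "i < dim_vec (0\<^sub>v (Suc n) :: complex vec)"
    then have "i \<le> n" by simp
    moreover have "v i = 0" using \<open>v = (\<lambda>_. 0)\<close> by simp
    ultimately show "w $ i = 0\<^sub>v (Suc n) $ i" using i by (simp add: v_def)
  qed (use w(1) in simp)
  with w(2) show False by simp
qed

lemma Vsp_hom: "\<psi> \<in> Vsp n N k \<Longrightarrow> i \<le> N \<Longrightarrow> hom_poly n k (\<psi> i)"
  by (simp add: Vsp_def)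

lemma Jent_coords:
  assumes "hom_poly n k P"
  shows "Jent P b z = (\<Sum>a\<in>{a. Poly_Mapping.keys a \<subseteq> {0..n} \<and> mdeg a = k}. Poly_Mapping.lookup P a * Pd b a z)"
  unfolding Jent_def
  by (rule sum.mono_neutral_left) (use assms finite_Mk in \<open>auto simp: hom_poly_alt in_keys_iff\<close>)

lemma G_exists:
  "\<exists>G. \<forall>\<psi>\<in>Vsp n N k. cpoly_eval G (Vcoords \<psi>) = det (MJ n N R \<psi> p)"
proof -
  let ?M = "{a. Poly_Mapping.keys a \<subseteq> {0..n} \<and> mdeg a = k}"
  let ?f = "\<lambda>c a b. \<Sum>i\<in>{0..N}. R a i * (\<Sum>\<alpha>\<in>?M. c (i, \<alpha>) * Pd b \<alpha> p)"
  have "pf (\<lambda>c. det (mat (Suc n) (Suc n) (\<lambda>(a,b). ?f c a b)))"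
    by (rule pf_det) (intro pf_sum pf_mult pf_const pf_var)
  then obtain G where G: "\<And>c. det (mat (Suc n) (Suc n) (\<lambda>(a,b). ?f c a b)) = cpoly_eval G c"
    unfolding pf_def by blast
  show ?thesis
  proof (intro exI ballI)
    fix \<psi> assume \<psi>: "\<psi> \<in> Vsp n N k"
    have "(\<lambda>(a,b). ?f (Vcoords \<psi>) a b) = (\<lambda>(a,b). \<Sum>i\<in>{0..N}. R a i * Jent (\<psi> i) b p)"
      by (auto simp: fun_eq_iff Vcoords_def Jent_coords[OF Vsp_hom[OF \<psi>]] intro!: sum.cong)
    then show "cpoly_eval G (Vcoords \<psi>) = det (MJ n N R \<psi> p)"
      using G[of "Vcoords \<psi>"] by (simp add: MJ_def)
  qed
qed

lemma dpsi_Jv: "\<psi> \<in> Vsp n N k \<Longrightarrow> i \<le> N \<Longrightarrow> dpsi \<psi> p v i = Jv \<psi> p n v i"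
  by (simp add: dpsi_eq[OF Vsp_hom] Jv_def)

lemma euler_Jv: "\<psi> \<in> Vsp n N k \<Longrightarrow> i \<le> N \<Longrightarrow> Jv \<psi> p n p i = of_nat k * cpoly_eval (\<psi> i) p"
  by (simp add: euler[OF Vsp_hom] Jv_def)

lemma Jv_lin: "Jv \<psi> p n (\<lambda>j. v j - d * q j) i = Jv \<psi> p n v i - d * Jv \<psi> p n q i"
  unfolding Jv_def by (simp add: algebra_simps sum_subtractf sum_distrib_left)

lemma Jv_scale: "Jv \<psi> p n (\<lambda>j. d * q j) i = d * Jv \<psi> p n q i"
  unfolding Jv_def by (simp add: algebra_simps sum_distrib_left)

lemma gen_imm:
  assumes k: "k \<ge> 1" and \<psi>: "\<psi> \<in> Vsp n N k" and p: "cpt n p" "p \<noteq> (\<lambda>_. 0)"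
    and d: "det (MJ n N R \<psi> p) \<noteq> 0"
  shows "generic_immersion n N \<psi>"
proof -
  have "hpf n (Suc n * (k - 1)) (\<lambda>z. det (mat (Suc n) (Suc n) (\<lambda>(a,b). \<Sum>i\<in>{0..N}. R a i * Jent (\<psi> i) b z)))"
    by (rule hpf_det) (intro hpf_sum hpf_scale hpf_Jent Vsp_hom[OF \<psi>], simp)
  then obtain g where g1: "hom_poly n (Suc n * (k - 1)) g"
    and g2: "\<forall>z. det (mat (Suc n) (Suc n) (\<lambda>(a,b). \<Sum>i\<in>{0..N}. R a i * Jent (\<psi> i) b z)) = cpoly_eval g z"
    unfolding hpf_def by blast
  have g: "hom_poly n (Suc n * (k - 1)) g" "\<And>z. det (MJ n N R \<psi> z) = cpoly_eval g z"
    using g1 g2 by (simp_all add: MJ_def)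
  have kne: "(of_nat k :: complex) \<noteq> 0" using k by simp
  have imm: "immersion_at n N \<psi> q" if q: "cpt n q" "q \<noteq> (\<lambda>_. 0)" "cpoly_eval g q \<noteq> 0" for q
  proof -
    have dq: "det (MJ n N R \<psi> q) \<noteq> 0" using g(2) q(3) by simp
    have ex: "\<exists>i\<le>N. cpoly_eval (\<psi> i) q \<noteq> 0"
    proof (rule ccontr)
      assume "\<not> ?thesis"
      then have "\<And>i. i \<le> N \<Longrightarrow> Jv \<psi> q n q i = 0" using euler_Jv[OF \<psi>] by simp
      then have "q = (\<lambda>_. 0)"
        by (intro det_ne0_inj[OF dq _ q(1)]) simp
      with q(2) show False by simp
    qed
    have inj: "\<exists>d. v = (\<lambda>j. d * q j)"
      if v: "cpt n v" and c: "\<forall>i\<le>N. dpsi \<psi> q v i = c * cpoly_eval (\<psi> i) q" for v c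
    proof -
      define d where "d = c / of_nat k"
      let ?w = "\<lambda>j. v j - d * q j"
      have cw: "cpt n ?w" using v q(1) by (simp add: cpt_def)
      have "Jv \<psi> q n ?w i = 0" if i: "i \<le> N" for i
      proof -
        have e1: "Jv \<psi> q n v i = c * cpoly_eval (\<psi> i) q" using c i dpsi_Jv[OF \<psi> i, of q v] by simp
        have e2: "Jv \<psi> q n q i = of_nat k * cpoly_eval (\<psi> i) q" by (rule euler_Jv[OF \<psi> i])
        show ?thesis unfolding Jv_lin e1 e2 d_def using kne by simp
      qed
      then have "?w = (\<lambda>_. 0)"
        by (intro det_ne0_inj[OF dq _ cw]) simp
      then have "v = (\<lambda>j. d * q j)" by (simp add: fun_eq_iff)
      then show ?thesis by blast
    qed
    show ?thesis unfolding immersion_at_def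
    proof (intro conjI allI impI)
      fix v assume "cpt n v" "\<exists>c. \<forall>i\<le>N. dpsi \<psi> q v i = c * cpoly_eval (\<psi> i) q"
      then obtain c where "\<forall>i\<le>N. dpsi \<psi> q v i = c * cpoly_eval (\<psi> i) q" by (elim exE)
      then show "\<exists>d. v = (\<lambda>j. d * q j)" by (rule inj[OF \<open>cpt n v\<close>])
    qed (use q(1,2) ex in simp_all)
  qed
  have gp: "cpoly_eval g p \<noteq> 0" using g(2)[of p] d by simp
  show ?thesis unfolding generic_immersion_def
  proof (intro exI[of _ "Suc n * (k - 1)"] exI[of _ g] conjI allI impI)
    show "hom_poly n (Suc n * (k - 1)) g" by (rule g(1))
    show "\<exists>p. cpt n p \<and> p \<noteq> (\<lambda>_. 0) \<and> cpoly_eval g p \<noteq> 0"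
      using p gp by (intro exI[of _ p]) simp
    fix q assume "cpt n q \<and> q \<noteq> (\<lambda>_. 0) \<and> cpoly_eval g q \<noteq> 0"
    then show "immersion_at n N \<psi> q" using imm by simp
  qed
qed

lemma sum_cnj_zero:
  assumes "(\<Sum>i\<in>I. X i * cnj (X i)) = 0" "finite I" "i \<in> I"
  shows "X i = (0::complex)"
proof -
  have "(\<Sum>i\<in>I. X i * cnj (X i)) = (\<Sum>i\<in>I. complex_of_real ((cmod (X i))\<^sup>2))"
    by (intro sum.cong refl) (rule complex_norm_square[symmetric])
  also have "\<dots> = complex_of_real (\<Sum>i\<in>I. (cmod (X i))\<^sup>2)"
    by (rule of_real_sum[symmetric])
  finally have "complex_of_real (\<Sum>i\<in>I. (cmod (X i))\<^sup>2) = 0" using assms(1) by simp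
  then have s0: "(\<Sum>i\<in>I. (cmod (X i))\<^sup>2) = 0" by (rule iffD1[OF of_real_eq_0_iff])
  have "(\<Sum>i\<in>I. (cmod (X i))\<^sup>2) = 0 \<longleftrightarrow> (\<forall>i\<in>I. (cmod (X i))\<^sup>2 = 0)"
    by (rule sum_nonneg_eq_0_iff[OF assms(2)]) simp
  then have "(cmod (X i))\<^sup>2 = 0" using s0 assms(3) by simp
  then show ?thesis by simp
qed

lemma imm_det:
  assumes k: "k \<ge> 1" and \<psi>: "\<psi> \<in> Vsp n N k" and imm: "immersion_at n N \<psi> p"
  shows "det (MJ n N (\<lambda>a i. cnj (Jent (\<psi> i) a p)) \<psi> p) \<noteq> 0"
proof (rule inj_det_ne0)
  fix v assume v: "cpt n v" and h: "\<forall>a\<le>n. (\<Sum>i\<in>{0..N}. cnj (Jent (\<psi> i) a p) * Jv \<psi> p n v i) = 0"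
  let ?X = "\<lambda>i. Jv \<psi> p n v i"
  have "0 = (\<Sum>a\<in>{0..n}. cnj (v a) * (\<Sum>i\<in>{0..N}. cnj (Jent (\<psi> i) a p) * ?X i))"
    using h by simp
  also have "\<dots> = (\<Sum>a\<in>{0..n}. \<Sum>i\<in>{0..N}. ?X i * cnj (v a * Jent (\<psi> i) a p))"
    by (intro sum.cong refl) (simp add: sum_distrib_left mult_ac)
  also have "\<dots> = (\<Sum>i\<in>{0..N}. \<Sum>a\<in>{0..n}. ?X i * cnj (v a * Jent (\<psi> i) a p))"
    by (rule sum.swap)
  also have "\<dots> = (\<Sum>i\<in>{0..N}. ?X i * cnj (?X i))"
    by (intro sum.cong refl) (simp only: Jv_def cnj_sum sum_distrib_left)
  finally have X00: "(\<Sum>i\<in>{0..N}. ?X i * cnj (?X i)) = 0" by (rule sym)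
  have X0: "?X i = 0" if "i \<le> N" for i
    using sum_cnj_zero[OF X00] that by simp
  note imm' = imm[unfolded immersion_at_def]
  have ex: "\<exists>i\<le>N. cpoly_eval (\<psi> i) p \<noteq> 0" using imm'[THEN conjunct2, THEN conjunct2, THEN conjunct1] .
  have inj: "\<forall>v. cpt n v \<longrightarrow> (\<exists>c. \<forall>i\<le>N. dpsi \<psi> p v i = c * cpoly_eval (\<psi> i) p) \<longrightarrow> (\<exists>d. v = (\<lambda>j. d * p j))"
    using imm'[THEN conjunct2, THEN conjunct2, THEN conjunct2] .
  have "\<forall>i\<le>N. dpsi \<psi> p v i = 0 * cpoly_eval (\<psi> i) p"
    using X0 dpsi_Jv[OF \<psi>] by simp
  then have "\<exists>c. \<forall>i\<le>N. dpsi \<psi> p v i = c * cpoly_eval (\<psi> i) p" by (rule exI)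
  moreover have "cpt n v \<longrightarrow> (\<exists>c. \<forall>i\<le>N. dpsi \<psi> p v i = c * cpoly_eval (\<psi> i) p) \<longrightarrow> (\<exists>d. v = (\<lambda>j. d * p j))"
    using inj by (rule spec)
  ultimately have "\<exists>d. v = (\<lambda>j. d * p j)" using v by simp
  then obtain d where dv: "v = (\<lambda>j. d * p j)" by (elim exE)
  obtain i0 where i0: "i0 \<le> N" "cpoly_eval (\<psi> i0) p \<noteq> 0" using ex by blast
  have "0 = ?X i0" using X0 i0 by simp
  also have "\<dots> = d * (of_nat k * cpoly_eval (\<psi> i0) p)"
    unfolding dv Jv_scale euler_Jv[OF \<psi> i0(1)] ..
  finally have "d = 0" using i0 k by simp
  then show "v = (\<lambda>_. 0)" using dv by simp
qed

definition Sset :: "nat \<Rightarrow> nat \<Rightarrow> nat \<Rightarrow> (nat \<times> (nat \<Rightarrow>\<^sub>0 nat)) cpoly set" where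
  "Sset n N k = {G. \<exists>p R. cpt n p \<and> p \<noteq> (\<lambda>_. 0) \<and>
      (\<forall>\<psi>\<in>Vsp n N k. cpoly_eval G (Vcoords \<psi>) = det (MJ n N R \<psi> p))}"

theorem lemma9:
  fixes n N k :: nat
  assumes "n \<ge> 1" and "N \<ge> 1" and "k \<ge> 1"
  shows "zariski_open_in_V (V1 n N k) (V2 n N k)"
proof -
  have sub: "V2 n N k \<subseteq> V1 n N k" by (auto simp: V2_def)
  have eq: "V2 n N k = {\<psi> \<in> V1 n N k. \<exists>G\<in>Sset n N k. cpoly_eval G (Vcoords \<psi>) \<noteq> 0}"
  proof (rule subset_antisym; rule subsetI)
    fix \<psi> assume "\<psi> \<in> V2 n N k"
    then have v1: "\<psi> \<in> V1 n N k" and gi: "generic_immersion n N \<psi>" by (auto simp: V2_def)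
    then have \<psi>: "\<psi> \<in> Vsp n N k" by (simp add: V1_def)
    from gi obtain dd g where gg: "hom_poly n dd g \<and> (\<exists>p. cpt n p \<and> p \<noteq> (\<lambda>_. 0) \<and> cpoly_eval g p \<noteq> 0) \<and>
       (\<forall>p. cpt n p \<and> p \<noteq> (\<lambda>_. 0) \<and> cpoly_eval g p \<noteq> 0 \<longrightarrow> immersion_at n N \<psi> p)"
      unfolding generic_immersion_def by (elim exE)
    note g = gg[THEN conjunct2, THEN conjunct1] gg[THEN conjunct2, THEN conjunct2]
    from g(1) obtain p where p0: "cpt n p \<and> p \<noteq> (\<lambda>_. 0) \<and> cpoly_eval g p \<noteq> 0" by (elim exE)
    have p: "cpt n p" "p \<noteq> (\<lambda>_. 0)" "immersion_at n N \<psi> p" using p0 g(2) by auto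
    let ?R = "\<lambda>a i. cnj (Jent (\<psi> i) a p)"
    obtain G where G: "\<forall>\<psi>\<in>Vsp n N k. cpoly_eval G (Vcoords \<psi>) = det (MJ n N ?R \<psi> p)"
      using G_exists by blast
    have "G \<in> Sset n N k" unfolding Sset_def using p G by blast
    moreover have "cpoly_eval G (Vcoords \<psi>) \<noteq> 0"
      using G \<psi> imm_det[OF assms(3) \<psi> p(3)] by simp
    ultimately show "\<psi> \<in> {\<psi> \<in> V1 n N k. \<exists>G\<in>Sset n N k. cpoly_eval G (Vcoords \<psi>) \<noteq> 0}"
      using v1 by blast
  next
    fix \<psi> assume "\<psi> \<in> {\<psi> \<in> V1 n N k. \<exists>G\<in>Sset n N k. cpoly_eval G (Vcoords \<psi>) \<noteq> 0}"
    then obtain G where v1: "\<psi> \<in> V1 n N k" and G: "G \<in> Sset n N k" "cpoly_eval G (Vcoords \<psi>) \<noteq> 0"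
      by blast
    then have \<psi>: "\<psi> \<in> Vsp n N k" by (simp add: V1_def)
    from G obtain p R where p: "cpt n p" "p \<noteq> (\<lambda>_. 0)"
      and GR: "\<forall>\<psi>\<in>Vsp n N k. cpoly_eval G (Vcoords \<psi>) = det (MJ n N R \<psi> p)"
      unfolding Sset_def by blast
    have "det (MJ n N R \<psi> p) \<noteq> 0" using GR \<psi> G(2) by simp
    then have "generic_immersion n N \<psi>" by (rule gen_imm[OF assms(3) \<psi> p])
    then show "\<psi> \<in> V2 n N k" using v1 by (simp add: V2_def)
  qed
  show ?thesis unfolding zariski_open_in_V_def
    using sub eq by (intro conjI exI[of _ "Sset n N k"])
qed

end
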